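(* Let $k$ be a field of characteristic different from $2$ containing a square root of $-1$, and let $q$ be a quadratic form of dimension $n$ over $k$. (i) If $q\in I(k)$, then $\mathrm{Pf}_1(q)\leq n$; if moreover $q$ represents $1$, then $\mathrm{Pf}_1(q)\leq n-1$. (ii) If $q\in I^2(k)$, then $\mathrm{Pf}_2(q)\leq n-2$; if moreover $q$ represents $1$, then $\mathrm{Pf}_2(q)\leq n-3$.
   Context: $W(k)$ is the Witt ring, $I(k)$ its fundamental ideal (classes of even-dimensional forms), $I^m(k)$ its $m$-th power; a form is in $I^m(k)$ if its Witt class is. An $m$-fold Pfister form is $\langle\langle a_1,\ldots,a_m\rangle\rangle=\langle 1,a_1\rangle\otimes\cdots\otimes\langle 1,a_m\rangle$, $a_i\in k^\times$. For $q\in I^m(k)$, $\mathrm{Pf}_m(q)$ is the least number of terms in an expression of the Witt class of $q$ as a sum of $m$-fold Pfister forms in $W(k)$. *)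

theory Defs
  imports Main
begin

text \<open>Nondegenerate quadratic forms over a field of characteristic not 2 are
  represented by diagonal forms: the list [a1,...,an] stands for
  the form a1 x1^2 + ... + an xn^2, all ai nonzero.\<close>

definition nondeg :: "'a::field list \<Rightarrow> bool" where
  "nondeg q \<longleftrightarrow> (\<forall>a\<in>set q. a \<noteq> 0)"

definition qval :: "'a::field list \<Rightarrow> (nat \<Rightarrow> 'a) \<Rightarrow> 'a" where
  "qval q x = (\<Sum>i<length q. q ! i * (x i)^2)"

definition represents :: "'a::field list \<Rightarrow> 'a \<Rightarrow> bool" where
  "represents q c \<longleftrightarrow> (\<exists>x. qval q x = c)"

definition matapp :: "nat \<Rightarrow> (nat \<Rightarrow> nat \<Rightarrow> 'a::field) \<Rightarrow> (nat \<Rightarrow> 'a) \<Rightarrow> (nat \<Rightarrow> 'a)" where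
  "matapp n M x = (\<lambda>i. \<Sum>j<n. M i j * x j)"

definition isometric :: "'a::field list \<Rightarrow> 'a list \<Rightarrow> bool" where
  "isometric q p \<longleftrightarrow> length q = length p \<and>
     (\<exists>M N. (\<forall>i<length q. \<forall>j<length q.
               (\<Sum>l<length q. M i l * N l j) = (if i = j then 1 else 0) \<and>
               (\<Sum>l<length q. N i l * M l j) = (if i = j then 1 else 0)) \<and>
            (\<forall>x. qval p x = qval q (matapp (length q) M x)))"

text \<open>Orthogonal sum is list concatenation; tensor product of diagonal forms.\<close>
definition tensor :: "'a::field list \<Rightarrow> 'a list \<Rightarrow> 'a list" where
  "tensor a b = concat (map (\<lambda>x. map (\<lambda>y. x * y) b) a)"

definition hyp :: "nat \<Rightarrow> 'a::field list" where
  "hyp r = concat (replicate r [1, -1])"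

definition witt_eq :: "'a::field list \<Rightarrow> 'a list \<Rightarrow> bool" where
  "witt_eq q p \<longleftrightarrow> (\<exists>r s. isometric (q @ hyp r) (p @ hyp s))"

text \<open>q \<in> I^m(k): the Witt class of q is a finite sum of products of m elements of
  the fundamental ideal I(k) (classes of even-dimensional forms).  Since I(k) is closed
  under negation, finite sums of such products form the m-th power ideal.\<close>
definition in_Ipow :: "nat \<Rightarrow> 'a::field list \<Rightarrow> bool" where
  "in_Ipow m q \<longleftrightarrow> (\<exists>fs :: 'a list list list.
      (\<forall>f\<in>set fs. length f = m \<and> (\<forall>\<phi>\<in>set f. even (length \<phi>) \<and> nondeg \<phi>)) \<and>
      witt_eq q (concat (map (\<lambda>f. foldr tensor f [1]) fs)))"

definition pfister :: "'a::field list \<Rightarrow> 'a list" where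
  "pfister as = foldr (\<lambda>a p. tensor [1, a] p) as [1]"

definition Pf :: "nat \<Rightarrow> 'a::field list \<Rightarrow> nat" where
  "Pf m q = (LEAST r. \<exists>ps :: 'a list list. length ps = r \<and>
       (\<forall>p\<in>set ps. length p = m \<and> nondeg p) \<and>
       witt_eq q (concat (map pfister ps)))"

end

theory Submission
  imports Defs "HOL-Combinatorics.Permutations" "Jordan_Normal_Form.Determinant"
begin


definition mmul :: "nat \<Rightarrow> (nat \<Rightarrow> nat \<Rightarrow> 'a::field) \<Rightarrow> (nat \<Rightarrow> nat \<Rightarrow> 'a) \<Rightarrow> nat \<Rightarrow> nat \<Rightarrow> 'a" where
  "mmul n A B = (\<lambda>i j. \<Sum>l<n. A i l * B l j)"

definition isinv :: "nat \<Rightarrow> (nat \<Rightarrow> nat \<Rightarrow> 'a::field) \<Rightarrow> (nat \<Rightarrow> nat \<Rightarrow> 'a) \<Rightarrow> bool" where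
  "isinv n M N \<longleftrightarrow> (\<forall>i<n. \<forall>j<n. mmul n M N i j = (if i = j then 1 else 0) \<and> mmul n N M i j = (if i = j then 1 else 0))"

lemma isometric_alt:
  "isometric q p \<longleftrightarrow> length q = length p \<and> (\<exists>M N. isinv (length q) M N \<and> (\<forall>x. qval p x = qval q (matapp (length q) M x)))"
  unfolding isometric_def isinv_def mmul_def by blast

lemma qval_cong: "(\<And>i. i < length q \<Longrightarrow> x i = y i) \<Longrightarrow> qval q x = qval q y"
  unfolding qval_def by (rule sum.cong) auto

lemma matapp_comp: "matapp n A (matapp n B x) = matapp n (mmul n A B) x"
proof (rule ext)
  fix i
  have "matapp n A (matapp n B x) i = (\<Sum>j<n. \<Sum>l<n. A i j * (B j l * x l))"
    unfolding matapp_def by (simp add: sum_distrib_left)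
  also have "\<dots> = (\<Sum>l<n. \<Sum>j<n. A i j * (B j l * x l))" by (rule sum.swap)
  also have "\<dots> = matapp n (mmul n A B) x i"
    unfolding matapp_def mmul_def by (simp add: sum_distrib_right mult.assoc)
  finally show "matapp n A (matapp n B x) i = matapp n (mmul n A B) x i" .
qed

lemma matapp_id: assumes "\<And>i j. i < n \<Longrightarrow> j < n \<Longrightarrow> M i j = (if i = j then 1 else 0)" "i < n"
  shows "matapp n M x i = x i"
proof -
  have "matapp n M x i = (\<Sum>j<n. (if i = j then x j else 0))"
    unfolding matapp_def by (rule sum.cong) (use assms in auto)
  also have "\<dots> = x i" using assms(2) by simp
  finally show ?thesis .
qed

lemma mmul_assoc: "mmul n (mmul n A B) C = mmul n A (mmul n B C)"
proof (intro ext)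
  fix i j
  have "mmul n (mmul n A B) C i j = (\<Sum>l<n. \<Sum>k<n. A i k * (B k l * C l j))"
    unfolding mmul_def by (simp add: sum_distrib_right mult.assoc)
  also have "\<dots> = (\<Sum>k<n. \<Sum>l<n. A i k * (B k l * C l j))" by (rule sum.swap)
  also have "\<dots> = mmul n A (mmul n B C) i j"
    unfolding mmul_def by (simp add: sum_distrib_left)
  finally show "mmul n (mmul n A B) C i j = mmul n A (mmul n B C) i j" .
qed

lemma mmul_id_left: assumes "\<And>i j. i < n \<Longrightarrow> j < n \<Longrightarrow> M i j = (if i = j then 1 else 0)" "i < n"
  shows "mmul n M A i j = A i j"
proof -
  have "mmul n M A i j = (\<Sum>l<n. (if i = l then A l j else 0))"
    unfolding mmul_def by (rule sum.cong) (use assms in auto)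
  also have "\<dots> = A i j" using assms(2) by simp
  finally show ?thesis .
qed

lemma mmul_cong: "(\<And>i j. i < n \<Longrightarrow> j < n \<Longrightarrow> A i j = A' i j) \<Longrightarrow> (\<And>i j. i < n \<Longrightarrow> j < n \<Longrightarrow> B i j = B' i j)
  \<Longrightarrow> i < n \<Longrightarrow> j < n \<Longrightarrow> mmul n A B i j = mmul n A' B' i j"
  unfolding mmul_def by (rule sum.cong) auto

lemma mmul_gen:
  fixes M M' N N' :: "nat \<Rightarrow> nat \<Rightarrow> 'a::field"
  assumes "i < n" "j < n" and I: "\<And>i j. i < n \<Longrightarrow> j < n \<Longrightarrow> mmul n M' N' i j = (if i = j then 1 else 0)"
  shows "mmul n (mmul n M M') (mmul n N' N) i j = mmul n M N i j"
proof -
  have B: "mmul n (mmul n M' N') N l j = N l j" if "l < n" for l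
    by (rule mmul_id_left[where M="mmul n M' N'", OF I that])
  have "mmul n (mmul n M M') (mmul n N' N) i j = mmul n M (mmul n (mmul n M' N') N) i j"
    by (simp only: mmul_assoc)
  also have "\<dots> = mmul n M N i j"
    unfolding mmul_def[of n M] by (rule sum.cong[OF refl]) (simp add: B)
  finally show ?thesis .
qed

lemma isinv_comp: assumes "isinv n M N" "isinv n M' N'"
  shows "isinv n (mmul n M M') (mmul n N' N)"
  unfolding isinv_def
proof (intro allI impI conjI)
  fix i j assume ij: "i < n" "j < n"
  have I1: "\<And>i j. i < n \<Longrightarrow> j < n \<Longrightarrow> mmul n M' N' i j = (if i = j then 1 else 0)"
   and I2: "\<And>i j. i < n \<Longrightarrow> j < n \<Longrightarrow> mmul n N M i j = (if i = j then 1 else 0)"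
   and I3: "\<And>i j. i < n \<Longrightarrow> j < n \<Longrightarrow> mmul n M N i j = (if i = j then 1 else 0)"
   and I4: "\<And>i j. i < n \<Longrightarrow> j < n \<Longrightarrow> mmul n N' M' i j = (if i = j then 1 else 0)"
    using assms unfolding isinv_def by blast+
  show "mmul n (mmul n M M') (mmul n N' N) i j = (if i = j then 1 else 0)"
    using mmul_gen[OF ij I1] I3[OF ij] by simp
  show "mmul n (mmul n N' N) (mmul n M M') i j = (if i = j then 1 else 0)"
    using mmul_gen[OF ij I2] I4[OF ij] by simp
qed

lemma isometric_refl: "isometric q q"
  unfolding isometric_alt
proof (intro conjI exI)
  let ?I = "\<lambda>i j. if i = j then 1 else (0::'a)"
  have "mmul (length q) ?I ?I i j = ?I i j" if "i < length q" for i j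
    by (rule mmul_id_left) (use that in simp_all)
  then show "isinv (length q) ?I ?I" unfolding isinv_def by simp
  show "\<forall>x. qval q x = qval q (matapp (length q) ?I x)"
  proof
    fix x show "qval q x = qval q (matapp (length q) ?I x)"
      by (rule qval_cong, rule matapp_id[symmetric]) simp_all
  qed
qed simp

lemma isometric_sym: assumes "isometric q p" shows "isometric p q"
proof -
  from assms obtain M N where l: "length q = length p" and inv: "isinv (length q) M N"
    and e: "\<And>x. qval p x = qval q (matapp (length q) M x)" unfolding isometric_alt by blast
  have inv': "isinv (length p) N M" using inv l unfolding isinv_def by metis
  have X: "qval q x = qval p (matapp (length p) N x)" for x
  proof -
    have "qval p (matapp (length p) N x) = qval q (matapp (length q) M (matapp (length q) N x))"
      using e l by metis
    also have "\<dots> = qval q (matapp (length q) (mmul (length q) M N) x)"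
      by (simp only: matapp_comp)
    also have "\<dots> = qval q x"
    proof (rule qval_cong)
      fix i assume "i < length q"
      moreover have "\<And>i j. i < length q \<Longrightarrow> j < length q \<Longrightarrow> mmul (length q) M N i j = (if i = j then 1 else 0)"
        using inv unfolding isinv_def by blast
      ultimately show "matapp (length q) (mmul (length q) M N) x i = x i" by (rule matapp_id[rotated])
    qed
    finally show ?thesis by (rule sym)
  qed
  have "length p = length q" using l by simp
  then show ?thesis unfolding isometric_alt using inv' X by blast
qed

lemma isometric_trans: assumes "isometric q p" "isometric p t" shows "isometric q t"
proof -
  from assms(1) obtain M N where l: "length q = length p" and inv: "isinv (length q) M N"
    and e: "\<And>x. qval p x = qval q (matapp (length q) M x)" unfolding isometric_alt by blast
  from assms(2) obtain M' N' where l': "length p = length t" and inv': "isinv (length p) M' N'"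
    and e': "\<And>x. qval t x = qval p (matapp (length p) M' x)" unfolding isometric_alt by blast
  have X: "qval t x = qval q (matapp (length q) (mmul (length q) M M') x)" for x
  proof -
    have "qval t x = qval q (matapp (length q) M (matapp (length q) M' x))"
      using e e' l by metis
    then show ?thesis by (simp only: matapp_comp)
  qed
  moreover have "isinv (length q) (mmul (length q) M M') (mmul (length q) N' N)"
    using isinv_comp[OF inv] inv' l by metis
  moreover have "length q = length t" using l l' by simp
  ultimately show ?thesis unfolding isometric_alt by blast
qed


lemma qval_Nil[simp]: "qval [] x = 0" by (simp add: qval_def)

lemma qval_Cons: "qval (a # q) x = a * (x 0)^2 + qval q (\<lambda>i. x (Suc i))"
  unfolding qval_def length_Cons by (subst sum.lessThan_Suc_shift) simp

lemma sum_split_add: "(\<Sum>i<n + (m::nat). f i) = (\<Sum>i<n. f i) + (\<Sum>i<m. f (n + i))"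
  by (induction m) (simp_all add: add.assoc)

lemma qval_append: "qval (q @ r) x = qval q x + qval r (\<lambda>i. x (length q + i))"
  unfolding qval_def by (simp add: sum_split_add nth_append)

lemma isometric_perm:
  assumes "\<sigma> permutes {..<length q}"
  shows "isometric q (permute_list \<sigma> q)"
proof -
  let ?n = "length q"
  let ?\<tau> = "Hilbert_Choice.inv \<sigma>"
  have st: "\<sigma> (?\<tau> i) = i" for i using assms by (simp add: permutes_inverses)
  have ts: "?\<tau> (\<sigma> i) = i" for i using assms by (simp add: permutes_inverses)
  have tp: "?\<tau> permutes {..<?n}" using assms by (rule permutes_inv)
  have tlt: "?\<tau> i < ?n" if "i < ?n" for i using permutes_in_image[OF tp] that by simp
  have slt: "\<sigma> i < ?n" if "i < ?n" for i using permutes_in_image[OF assms] that by simp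
  have iff: "(i = \<sigma> j) = (j = ?\<tau> i)" for i j using st ts by metis
  define M where "M = (\<lambda>i j. if i = \<sigma> j then 1 else (0::'a))"
  define N where "N = (\<lambda>i j. if j = \<sigma> i then 1 else (0::'a))"
  have Mx: "matapp ?n M x i = x (?\<tau> i)" if "i < ?n" for x i
  proof -
    have "matapp ?n M x i = (\<Sum>j<?n. if j = ?\<tau> i then x j else 0)"
      unfolding matapp_def M_def by (rule sum.cong) (auto simp: iff)
    then show ?thesis using tlt[OF that] by simp
  qed
  have q: "qval (permute_list \<sigma> q) x = qval q (matapp ?n M x)" for x
  proof -
    have "qval q (matapp ?n M x) = (\<Sum>i<?n. q ! i * (x (?\<tau> i))^2)"
      unfolding qval_def by (rule sum.cong) (auto simp: Mx)
    also have "\<dots> = (\<Sum>j<?n. q ! (\<sigma> j) * (x (?\<tau> (\<sigma> j)))^2)"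
      using sum.permute[OF assms, of "\<lambda>i. q ! i * (x (?\<tau> i))^2"] by (simp add: comp_def)
    also have "\<dots> = qval (permute_list \<sigma> q) x"
      unfolding qval_def length_permute_list
    proof (rule sum.cong[OF refl])
      fix j assume "j \<in> {..<?n}"
      then have "permute_list \<sigma> q ! j = q ! \<sigma> j" using permute_list_nth[OF assms] by simp
      then show "q ! (\<sigma> j) * (x (?\<tau> (\<sigma> j)))^2 = permute_list \<sigma> q ! j * (x j)^2"
        by (simp only: ts)
    qed
    finally show ?thesis by simp
  qed
  have inv: "isinv ?n M N"
    unfolding isinv_def
  proof (intro allI impI conjI)
    fix i j assume ij: "i < ?n" "j < ?n"
    have "mmul ?n M N i j = (\<Sum>l<?n. if l = ?\<tau> i then (if j = \<sigma> l then 1 else 0) else 0)"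
      unfolding mmul_def M_def N_def by (rule sum.cong) (auto simp: iff)
    also have "\<dots> = (if j = \<sigma> (?\<tau> i) then 1 else 0)" using tlt[OF ij(1)] by simp
    also have "\<dots> = (if i = j then 1 else 0)" by (simp only: st eq_commute[of j i])
    finally show "mmul ?n M N i j = (if i = j then 1 else 0)" .
    have "mmul ?n N M i j = (\<Sum>l<?n. if l = \<sigma> i then (if l = \<sigma> j then 1 else 0) else 0)"
      unfolding mmul_def M_def N_def by (rule sum.cong) auto
    also have "\<dots> = (if \<sigma> i = \<sigma> j then 1 else 0)" using slt[OF ij(1)] by simp
    also have "\<dots> = (if i = j then 1 else 0)" using ts by metis
    finally show "mmul ?n N M i j = (if i = j then 1 else 0)" .
  qed
  show ?thesis unfolding isometric_alt length_permute_list using q inv by blast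
qed

lemma isometric_mset: assumes "mset p = mset q" shows "isometric q p"
proof -
  obtain \<sigma> where "\<sigma> permutes {..<length q}" "permute_list \<sigma> q = p"
    using mset_eq_permutation[OF assms] by blast
  then show ?thesis using isometric_perm by metis
qed

definition blk :: "nat \<Rightarrow> (nat \<Rightarrow> nat \<Rightarrow> 'a::field) \<Rightarrow> (nat \<Rightarrow> nat \<Rightarrow> 'a) \<Rightarrow> nat \<Rightarrow> nat \<Rightarrow> 'a" where
  "blk n A B = (\<lambda>i j. if i < n then (if j < n then A i j else 0) else (if j < n then 0 else B (i - n) (j - n)))"

lemma mmul_blk:
  "mmul (n + m) (blk n A B) (blk n C D) i j =
     (if i < n then (if j < n then mmul n A C i j else 0) else (if j < n then 0 else mmul m B D (i - n) (j - n)))"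
proof -
  have "mmul (n + m) (blk n A B) (blk n C D) i j =
     (\<Sum>l<n. blk n A B i l * blk n C D l j) + (\<Sum>k<m. blk n A B i (n + k) * blk n C D (n + k) j)"
    unfolding mmul_def by (rule sum_split_add)
  also have "(\<Sum>l<n. blk n A B i l * blk n C D l j) = (if i < n \<and> j < n then mmul n A C i j else 0)"
    unfolding mmul_def blk_def by (rule trans[OF sum.cong[OF refl]], auto)
  also have "(\<Sum>k<m. blk n A B i (n + k) * blk n C D (n + k) j) = (if \<not> i < n \<and> \<not> j < n then mmul m B D (i - n) (j - n) else 0)"
    unfolding mmul_def blk_def by (rule trans[OF sum.cong[OF refl]], auto)
  finally show ?thesis by auto
qed

lemma matapp_blk1: "i < n \<Longrightarrow> matapp (n + m) (blk n A B) x i = matapp n A x i"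
  unfolding matapp_def sum_split_add blk_def by simp

lemma matapp_blk2: "matapp (n + m) (blk n A B) x (n + i) = matapp m B (\<lambda>k. x (n + k)) i"
  unfolding matapp_def sum_split_add blk_def by simp

lemma isometric_append: assumes "isometric q p" "isometric q2 p2"
  shows "isometric (q @ q2) (p @ p2)"
proof -
  from assms(1) obtain M N where l: "length q = length p" and inv: "isinv (length q) M N"
    and e: "\<And>x. qval p x = qval q (matapp (length q) M x)" unfolding isometric_alt by blast
  from assms(2) obtain M2 N2 where l2: "length q2 = length p2" and inv2: "isinv (length q2) M2 N2"
    and e2: "\<And>x. qval p2 x = qval q2 (matapp (length q2) M2 x)" unfolding isometric_alt by blast
  let ?n = "length q" let ?m = "length q2"
  have X: "qval (p @ p2) x = qval (q @ q2) (matapp (?n + ?m) (blk ?n M M2) x)" for x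
  proof -
    have a: "qval q (matapp (?n + ?m) (blk ?n M M2) x) = qval q (matapp ?n M x)"
      by (rule qval_cong) (rule matapp_blk1)
    have "qval (q @ q2) (matapp (?n + ?m) (blk ?n M M2) x)
        = qval q (matapp ?n M x) + qval q2 (matapp ?m M2 (\<lambda>k. x (?n + k)))"
      unfolding qval_append matapp_blk2 a ..
    also have "\<dots> = qval p x + qval p2 (\<lambda>k. x (?n + k))" using e e2 by metis
    also have "\<dots> = qval (p @ p2) x" unfolding qval_append l ..
    finally show ?thesis by (rule sym)
  qed
  have inv': "isinv (?n + ?m) (blk ?n M M2) (blk ?n N N2)"
    unfolding isinv_def mmul_blk
  proof (intro allI impI)
    fix i j assume ij: "i < ?n + ?m" "j < ?n + ?m"
    have I1: "\<forall>i<?n. \<forall>j<?n. mmul ?n M N i j = (if i = j then 1 else 0) \<and> mmul ?n N M i j = (if i = j then 1 else 0)"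
      using inv unfolding isinv_def .
    have I2: "\<forall>i<?m. \<forall>j<?m. mmul ?m M2 N2 i j = (if i = j then 1 else 0) \<and> mmul ?m N2 M2 i j = (if i = j then 1 else 0)"
      using inv2 unfolding isinv_def .
    show "(if i < ?n then if j < ?n then mmul ?n M N i j else 0
          else if j < ?n then 0 else mmul ?m M2 N2 (i - ?n) (j - ?n)) = (if i = j then 1 else 0) \<and>
          (if i < ?n then if j < ?n then mmul ?n N M i j else 0
          else if j < ?n then 0 else mmul ?m N2 M2 (i - ?n) (j - ?n)) = (if i = j then 1 else 0)"
    proof (cases "i < ?n"; cases "j < ?n")
      assume "\<not> i < ?n" "\<not> j < ?n"
      then have "i - ?n < ?m" "j - ?n < ?m" "(i - ?n = j - ?n) = (i = j)" using ij by auto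
      then show ?thesis using I2 \<open>\<not> i < ?n\<close> \<open>\<not> j < ?n\<close> by simp
    qed (use I1 in auto)
  qed
  have "length (q @ q2) = length (p @ p2)" using l l2 by simp
  then show ?thesis unfolding isometric_alt length_append using X inv' by blast
qed


lemma less2: "(i::nat) < 2 \<longleftrightarrow> i = 0 \<or> i = 1" by auto
lemma less1: "(i::nat) < 1 \<longleftrightarrow> i = 0" by auto
lemma sum2: "(\<Sum>j<(2::nat). f j) = f 0 + f 1" by (simp add: numeral_2_eq_2)

lemma qval_single: "qval [a] x = a * (x 0)^2" by (simp add: qval_Cons)
lemma qval_pair: "qval [a, b] x = a * (x 0)^2 + b * (x 1)^2" by (simp add: qval_Cons)

lemma iso_scale: fixes a t :: "'a::field" assumes "t \<noteq> 0" shows "isometric [a] [a * t^2]"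
  unfolding isometric_alt
proof (intro conjI exI)
  let ?M = "\<lambda>i j. t" and ?N = "\<lambda>i j. 1 / t"
  show "isinv (length [a]) ?M ?N" unfolding isinv_def mmul_def using assms by simp
  show "\<forall>x. qval [a * t^2] x = qval [a] (matapp (length [a]) ?M x)"
    by (simp add: qval_single matapp_def power2_eq_square algebra_simps)
qed simp

lemma iso_two:
  fixes a d x y c :: "'a::field"
  assumes c: "a * x^2 + d * y^2 = c" and c0: "c \<noteq> 0"
  shows "isometric [a, d] [c, a * d * c]"
  unfolding isometric_alt
proof (intro conjI exI)
  define M where "M = (\<lambda>(i::nat) (j::nat). if i = 0 then (if j = 0 then x else - d * y) else (if j = 0 then y else a * x))"
  define K where "K = (\<lambda>(i::nat) (j::nat). (if i = 0 then (if j = 0 then a * x else d * y) else (if j = 0 then - y else x)))"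
  define N where "N = (\<lambda>i j. K i j / c)"
  have MK: "mmul 2 M K 0 0 = c" "mmul 2 M K 0 1 = 0" "mmul 2 M K 1 0 = 0" "mmul 2 M K 1 1 = c"
       "mmul 2 K M 0 0 = c" "mmul 2 K M 0 1 = 0" "mmul 2 K M 1 0 = 0" "mmul 2 K M 1 1 = c"
    unfolding mmul_def sum2 M_def K_def c[symmetric] by (simp_all add: power2_eq_square algebra_simps)
  have dv: "mmul 2 M N i j = mmul 2 M K i j / c" "mmul 2 N M i j = mmul 2 K M i j / c" for i j
    unfolding mmul_def N_def by (simp_all add: sum_divide_distrib)
  have "mmul 2 M N i j = (if i = j then 1 else 0) \<and> mmul 2 N M i j = (if i = j then 1 else 0)"
    if "i < 2" "j < 2" for i j
  proof -
    have "i = 0 \<or> i = 1" "j = 0 \<or> j = 1" using that by auto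
    then show ?thesis unfolding dv using MK c0 by auto
  qed
  moreover have l2: "length [a, d] = (2::nat)" by simp
  ultimately show "isinv (length [a, d]) M N" unfolding isinv_def l2 by blast
  have g: "a * (x * u - d * y * v)^2 + d * (y * u + a * x * v)^2 = (a * x^2 + d * y^2) * u^2 + a * d * (a * x^2 + d * y^2) * v^2" for u v
    by (simp add: power2_eq_square algebra_simps)
  show "\<forall>xa. qval [c, a * d * c] xa = qval [a, d] (matapp (length [a, d]) M xa)"
  proof
    fix z
    have "matapp 2 M z 0 = x * z 0 - d * y * z 1" "matapp 2 M z 1 = y * z 0 + a * x * z 1"
      unfolding matapp_def sum2 M_def by simp_all
    then show "qval [c, a * d * c] z = qval [a, d] (matapp (length [a, d]) M z)"
      unfolding qval_pair l2 using g[of "z 0" "z 1"] c by simp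
  qed
qed simp

lemma iso_append_left: "isometric q p \<Longrightarrow> isometric (r @ q) (r @ p)"
  by (rule isometric_append[OF isometric_refl])

lemma iso_append_right: "isometric q p \<Longrightarrow> isometric (q @ r) (p @ r)"
  by (rule isometric_append[OF _ isometric_refl])

lemma iso_hyp_plane:
  fixes a :: "'a::field"
  assumes a: "a \<noteq> 0" and two: "(2::'a) \<noteq> 0"
  shows "isometric [a, -a] [1, -1]"
proof -
  let ?X = "(1 + 1/a) / 2" and ?Y = "(1 - 1/a) / 2"
  have "a * ?X^2 + (-a) * ?Y^2 = 1"
  proof -
    have g: "a * X^2 + (-a) * Y^2 = a * ((X - Y) * (X + Y))" for X Y :: 'a by (simp add: algebra_simps power2_eq_square)
    have "a * ?X^2 + (-a) * ?Y^2 = a * ((?X - ?Y) * (?X + ?Y))" by (rule g)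
    moreover have "?X - ?Y = 1 / a" using two by (simp add: diff_divide_distrib[symmetric])
    moreover have "?X + ?Y = 1" using two by (simp add: add_divide_distrib[symmetric])
    ultimately show ?thesis using a by simp
  qed
  then have 1: "isometric [a, -a] [1, a * (-a) * 1]" by (rule iso_two) simp
  have "isometric [-1] [-1 * a^2]" using a by (rule iso_scale)
  then have "isometric [1, -1] [1, -1 * a^2]" using iso_append_left[of "[-1]" _ "[1]"] by simp
  then have "isometric [1, -1 * a^2] [1, -1]" by (rule isometric_sym)
  moreover have "a * (-a) * 1 = -1 * a^2" by (simp add: power2_eq_square)
  ultimately show ?thesis using isometric_trans[OF 1] by simp
qed

lemma hyp_0[simp]: "hyp 0 = []" by (simp add: hyp_def)
lemma hyp_1: "hyp 1 = [1, -1]" by (simp add: hyp_def)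
lemma hyp_add: "hyp (r + s) = hyp r @ hyp s" by (simp add: hyp_def replicate_add)
lemma length_hyp[simp]: "length (hyp r) = 2 * r" by (induction r) (simp_all add: hyp_def)

lemma witt_iso: "isometric q p \<Longrightarrow> witt_eq q p"
  unfolding witt_eq_def by (rule exI[of _ 0], rule exI[of _ 0]) simp

lemma witt_refl: "witt_eq q q" by (rule witt_iso[OF isometric_refl])

lemma witt_sym: "witt_eq q p \<Longrightarrow> witt_eq p q"
  unfolding witt_eq_def using isometric_sym by blast

lemma witt_mset: "mset q = mset p \<Longrightarrow> witt_eq q p"
  by (rule witt_iso, rule isometric_mset) simp

lemma witt_trans: assumes "witt_eq q p" "witt_eq p t" shows "witt_eq q t"
proof -
  obtain r s where 1: "isometric (q @ hyp r) (p @ hyp s)" using assms(1) unfolding witt_eq_def by blast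
  obtain s' u where 2: "isometric (p @ hyp s') (t @ hyp u)" using assms(2) unfolding witt_eq_def by blast
  have "isometric (q @ hyp r @ hyp s') (p @ hyp s @ hyp s')" using iso_append_right[OF 1] by simp
  moreover have "isometric (p @ hyp s @ hyp s') (p @ hyp s' @ hyp s)" by (rule isometric_mset) simp
  moreover have "isometric (p @ hyp s' @ hyp s) (t @ hyp u @ hyp s)" using iso_append_right[OF 2] by simp
  ultimately have "isometric (q @ hyp r @ hyp s') (t @ hyp u @ hyp s)"
    by (blast intro: isometric_trans)
  then have "isometric (q @ hyp (r + s')) (t @ hyp (u + s))"
    unfolding hyp_add by simp
  then show ?thesis unfolding witt_eq_def by blast
qed

lemma witt_app: assumes "witt_eq A B" "witt_eq C D" shows "witt_eq (A @ C) (B @ D)"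
proof -
  obtain r s where 1: "isometric (A @ hyp r) (B @ hyp s)" using assms(1) unfolding witt_eq_def by blast
  obtain r' s' where 2: "isometric (C @ hyp r') (D @ hyp s')" using assms(2) unfolding witt_eq_def by blast
  have "isometric ((A @ C) @ hyp (r + r')) ((A @ hyp r) @ (C @ hyp r'))"
    unfolding hyp_add by (rule isometric_mset) simp
  moreover have "isometric ((A @ hyp r) @ (C @ hyp r')) ((B @ hyp s) @ (D @ hyp s'))"
    by (rule isometric_append[OF 1 2])
  moreover have "isometric ((B @ hyp s) @ (D @ hyp s')) ((B @ D) @ hyp (s + s'))"
    unfolding hyp_add by (rule isometric_mset) simp
  ultimately have "isometric ((A @ C) @ hyp (r + r')) ((B @ D) @ hyp (s + s'))"
    by (blast intro: isometric_trans)
  then show ?thesis unfolding witt_eq_def by blast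
qed

lemma witt_hyp_plane: assumes "(a::'a::field) \<noteq> 0" "(2::'a) \<noteq> 0" shows "witt_eq [a, -a] []"
proof -
  have "isometric ([a, -a] @ hyp 0) ([] @ hyp 1)" using iso_hyp_plane[OF assms] by (simp add: hyp_def)
  then show ?thesis unfolding witt_eq_def by blast
qed

lemma witt_double:
  fixes i :: "'a::field"
  assumes "(a::'a::field) \<noteq> 0" "(2::'a) \<noteq> 0" "i * i = -1"
  shows "witt_eq [a, a] []"
proof -
  have i0: "i \<noteq> 0" using assms(3) by auto
  have "isometric [a] [a * i^2]" using i0 by (rule iso_scale)
  then have "isometric [a, a] [a, a * i^2]" using iso_append_left[of "[a]" _ "[a]"] by simp
  moreover have "a * i^2 = -a" using assms(3) by (simp add: power2_eq_square)
  ultimately have "witt_eq [a, a] [a, -a]" using witt_iso by simp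
  then show ?thesis using witt_hyp_plane[OF assms(1,2)] by (rule witt_trans)
qed

lemma witt_cancel: "witt_eq C [] \<Longrightarrow> witt_eq (A @ C) A"
  using witt_app[OF witt_refl, of C "[]" A] by simp

lemma witt_mset_trans: "mset A = mset A' \<Longrightarrow> witt_eq A' B' \<Longrightarrow> mset B' = mset B \<Longrightarrow> witt_eq A B"
  by (rule witt_trans[OF witt_mset], assumption, rule witt_trans, assumption, rule witt_mset)


lemma mat_mult_entry: "i < n \<Longrightarrow> j < n \<Longrightarrow> (mat n n f * mat n n g) $$ (i, j) = (\<Sum>l<n. f (i, l) * g (l, j))"
  by (simp add: scalar_prod_def lessThan_atLeast0)

lemma qval_e1: "j < length p \<Longrightarrow> qval p (\<lambda>i. if i = j then 1 else 0) = p ! j"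
proof -
  assume j: "j < length p"
  have "qval p (\<lambda>i. if i = j then 1 else 0) = (\<Sum>i<length p. if i = j then p ! i else 0)"
    unfolding qval_def by (rule sum.cong) auto
  then show ?thesis using j by simp
qed

lemma qval_e2: "j < length p \<Longrightarrow> k < length p \<Longrightarrow> j \<noteq> k \<Longrightarrow>
  qval p (\<lambda>i. (if i = j then 1 else 0) + (if i = k then 1 else 0)) = p ! j + p ! k"
proof -
  assume jk: "j < length p" "k < length p" "j \<noteq> k"
  have "qval p (\<lambda>i. (if i = j then 1 else 0) + (if i = k then 1 else 0))
     = (\<Sum>i<length p. (if i = j then p ! i else 0) + (if i = k then p ! i else 0))"
    unfolding qval_def by (rule sum.cong) (use jk in auto)
  then show ?thesis using jk by (simp add: sum.distrib)
qed

lemma matapp_e1: "j < n \<Longrightarrow> matapp n M (\<lambda>i. if i = j then 1 else 0) = (\<lambda>l. M l j)"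
proof (rule ext)
  fix l assume j: "j < n"
  have "matapp n M (\<lambda>i. if i = j then 1 else 0) l = (\<Sum>i<n. if i = j then M l i else 0)"
    unfolding matapp_def by (rule sum.cong) auto
  then show "matapp n M (\<lambda>i. if i = j then 1 else 0) l = M l j" using j by simp
qed

lemma matapp_e2: "j < n \<Longrightarrow> k < n \<Longrightarrow> j \<noteq> k \<Longrightarrow>
   matapp n M (\<lambda>i. (if i = j then 1 else 0) + (if i = k then 1 else 0)) = (\<lambda>l. M l j + M l k)"
proof (rule ext)
  fix l assume jk: "j < n" "k < n" "j \<noteq> k"
  have "matapp n M (\<lambda>i. (if i = j then 1 else 0) + (if i = k then 1 else 0)) l
     = (\<Sum>i<n. (if i = j then M l i else 0) + (if i = k then M l i else 0))"
    unfolding matapp_def by (rule sum.cong) (auto simp: distrib_left)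
  then show "matapp n M (\<lambda>i. (if i = j then 1 else 0) + (if i = k then 1 else 0)) l = M l j + M l k"
    using jk by (simp add: sum.distrib)
qed

lemma gram:
  fixes q p :: "'a::field list"
  assumes two: "(2::'a) \<noteq> 0" and l: "length q = n" "length p = n"
    and e: "\<And>x. qval p x = qval q (matapp n M x)" and jk: "j < n" "k < n"
  shows "(\<Sum>l<n. q ! l * (M l j * M l k)) = (if j = k then p ! j else 0)"
proof -
  have d: "p ! j = (\<Sum>l<n. q ! l * (M l j * M l j))" if "j < n" for j
  proof -
    have "p ! j = qval q (\<lambda>l. M l j)"
      using e[of "\<lambda>i. if i = j then 1 else 0"] qval_e1[of j p] matapp_e1[OF that, of M] l that by simp
    then show ?thesis unfolding qval_def l by (simp add: power2_eq_square)
  qed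
  show ?thesis
  proof (cases "j = k")
    case True then show ?thesis using d[OF jk(1)] by simp
  next
    case False
    have "p ! j + p ! k = qval q (\<lambda>l. M l j + M l k)"
      using e[of "\<lambda>i. (if i = j then 1 else 0) + (if i = k then 1 else 0)"] qval_e2[of j p k] matapp_e2[OF jk False, of M] l jk False by simp
    also have "\<dots> = (\<Sum>l<n. q ! l * (M l j * M l j)) + (\<Sum>l<n. q ! l * (M l k * M l k)) + 2 * (\<Sum>l<n. q ! l * (M l j * M l k))"
      unfolding qval_def l by (simp add: power2_eq_square sum.distrib sum_distrib_left algebra_simps)
    finally have "2 * (\<Sum>l<n. q ! l * (M l j * M l k)) = 0" using d[OF jk(1)] d[OF jk(2)] by simp
    then show ?thesis using two False by simp
  qed
qed

lemma prod_list_diag: "det (mat (length q) (length q) (\<lambda>(i, j). if i = j then q ! i else 0)) = prod_list q"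
proof -
  let ?D = "mat (length q) (length q) (\<lambda>(i, j). if i = j then q ! i else 0)"
  have "upper_triangular ?D" unfolding upper_triangular_def by simp
  then have "det ?D = prod_list (diag_mat ?D)" by (rule det_upper_triangular) (rule mat_carrier)
  also have "diag_mat ?D = q" unfolding diag_mat_def
    by (rule nth_equalityI) simp_all
  finally show ?thesis .
qed

lemma iso_disc:
  fixes q p :: "'a::field list"
  assumes two: "(2::'a) \<noteq> 0" and iso: "isometric q p"
  shows "\<exists>d. d \<noteq> 0 \<and> prod_list p = d^2 * prod_list q"
proof -
  from iso obtain M N where l: "length q = length p" and inv: "isinv (length q) M N"
    and e: "\<And>x. qval p x = qval q (matapp (length q) M x)" unfolding isometric_alt by blast
  let ?n = "length q"
  define A where "A = mat ?n ?n (\<lambda>(i, j). M i j)"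
  define B where "B = mat ?n ?n (\<lambda>(i, j). N i j)"
  define Dq where "Dq = mat ?n ?n (\<lambda>(i, j). if i = j then q ! i else 0)"
  define Dp where "Dp = mat ?n ?n (\<lambda>(i, j). if i = j then p ! i else 0)"
  have A: "A \<in> carrier_mat ?n ?n" "B \<in> carrier_mat ?n ?n" "Dq \<in> carrier_mat ?n ?n"
    unfolding A_def B_def Dq_def by simp_all
  have "A * B = 1\<^sub>m ?n"
  proof (rule eq_matI)
    fix i j assume "i < dim_row (1\<^sub>m ?n :: 'a mat)" "j < dim_col (1\<^sub>m ?n :: 'a mat)"
    then have ij: "i < ?n" "j < ?n" by simp_all
    have "(A * B) $$ (i, j) = mmul ?n M N i j" unfolding A_def B_def mmul_def mat_mult_entry[OF ij]
      by simp
    then show "(A * B) $$ (i, j) = 1\<^sub>m ?n $$ (i, j)" using inv ij unfolding isinv_def by simp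
  qed (simp_all add: A_def B_def)
  then have "det A * det B = 1" using det_mult[OF A(1,2)] by simp
  then have dA: "det A \<noteq> 0" by auto
  have tA: "transpose_mat A = mat ?n ?n (\<lambda>(i, j). M j i)"
    by (rule eq_matI) (simp_all add: A_def)
  have DA: "Dq * A = mat ?n ?n (\<lambda>(i, j). q ! i * M i j)"
  proof (rule eq_matI)
    fix i j assume "i < dim_row (mat ?n ?n (\<lambda>(i, j). q ! i * M i j))" "j < dim_col (mat ?n ?n (\<lambda>(i, j). q ! i * M i j))"
    then have ij: "i < ?n" "j < ?n" by simp_all
    have "(Dq * A) $$ (i, j) = (\<Sum>l<?n. (if i = l then q ! i else 0) * M l j)"
      unfolding Dq_def A_def mat_mult_entry[OF ij] by simp
    also have "\<dots> = (\<Sum>l<?n. if l = i then q ! i * M i j else 0)" by (rule sum.cong) auto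
    finally show "(Dq * A) $$ (i, j) = mat ?n ?n (\<lambda>(i, j). q ! i * M i j) $$ (i, j)" using ij by simp
  qed (simp_all add: Dq_def A_def)
  have G: "transpose_mat A * (Dq * A) = Dp"
  proof (rule eq_matI)
    fix j k assume "j < dim_row Dp" "k < dim_col Dp"
    then have jk: "j < ?n" "k < ?n" by (simp_all add: Dp_def)
    have "(transpose_mat A * (Dq * A)) $$ (j, k) = (\<Sum>l<?n. q ! l * (M l j * M l k))"
      unfolding tA DA mat_mult_entry[OF jk] by (simp add: algebra_simps)
    also have "\<dots> = (if j = k then p ! j else 0)" by (rule gram[OF two refl l[symmetric] e jk])
    finally show "(transpose_mat A * (Dq * A)) $$ (j, k) = Dp $$ (j, k)" using jk by (simp add: Dp_def)
  qed (simp_all add: Dp_def A_def)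
  have "det Dp = det (transpose_mat A) * (det Dq * det A)"
    unfolding G[symmetric] using A by (simp add: det_mult[of _ ?n])
  also have "det (transpose_mat A) = det A" using A(1) by (rule det_transpose)
  finally have "det Dp = (det A)^2 * det Dq" by (simp add: power2_eq_square)
  moreover have "det Dq = prod_list q" unfolding Dq_def by (rule prod_list_diag)
  moreover have "det Dp = prod_list p" unfolding Dp_def l by (rule prod_list_diag)
  ultimately show ?thesis using dA by auto
qed


lemma repr_split:
  fixes q :: "'a::field list"
  shows "nondeg q \<Longrightarrow> qval q x = c \<Longrightarrow> c \<noteq> 0 \<Longrightarrow> \<exists>q'. nondeg q' \<and> isometric q (c # q')"
proof (induction q arbitrary: x c)
  case Nil then show ?case by simp
next
  case (Cons a r)
  let ?x = "\<lambda>i. x (Suc i)"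
  let ?d = "qval r ?x"
  have a: "a \<noteq> 0" and nr: "nondeg r" using Cons.prems(1) by (auto simp: nondeg_def)
  have eq: "a * (x 0)^2 + ?d = c" using Cons.prems(2) by (simp add: qval_Cons)
  show ?case
  proof (cases "?d = 0")
    case True
    then have "a * (x 0)^2 = c" using eq by simp
    moreover then have "x 0 \<noteq> 0" using Cons.prems(3) by auto
    ultimately have "isometric [a] [c]" using iso_scale by metis
    then have "isometric ([a] @ r) ([c] @ r)" by (rule iso_append_right)
    then show ?thesis using nr by auto
  next
    case False
    obtain r' where nr': "nondeg r'" and ir: "isometric r (?d # r')"
      using Cons.IH[OF nr refl False] by blast
    have 1: "isometric ([a] @ r) ([a] @ (?d # r'))" using ir by (rule iso_append_left)
    have "a * (x 0)^2 + ?d * 1^2 = c" using eq by simp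
    then have "isometric [a, ?d] [c, a * ?d * c]" using Cons.prems(3) by (rule iso_two)
    then have 2: "isometric ([a, ?d] @ r') ([c, a * ?d * c] @ r')" by (rule iso_append_right)
    have "isometric (a # r) (c # (a * ?d * c) # r')" using isometric_trans[OF 1] 2 by simp
    moreover have "nondeg ((a * ?d * c) # r')" using nr' a False Cons.prems(3) by (simp add: nondeg_def)
    ultimately show ?thesis by blast
  qed
qed

lemma prod_hyp: "prod_list (hyp r :: 'a::field list) = (-1)^r"
  by (induction r) (simp_all add: hyp_def)

lemma witt_disc:
  fixes q p :: "'a::field list" and i :: 'a
  assumes two: "(2::'a) \<noteq> 0" and ii: "i * i = -1" and w: "witt_eq q p" and sq: "prod_list p = s^2"
  shows "\<exists>t. prod_list q = t^2"
proof -
  obtain r u where "isometric (q @ hyp r) (p @ hyp u)" using w unfolding witt_eq_def by blast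
  then obtain d where d: "d \<noteq> 0" "prod_list (p @ hyp u) = d^2 * prod_list (q @ hyp r)"
    using iso_disc[OF two] by blast
  have m1: "(-1::'a)^k = (i^k)^2" for k using ii by (simp add: power_mult_distrib[symmetric] power2_eq_square power_mult[symmetric] mult.commute)
  have i0: "i \<noteq> 0" using ii by auto
  have "s^2 * (i^u)^2 = d^2 * prod_list q * (i^r)^2"
    using d(2) sq by (simp add: prod_hyp m1 mult.assoc)
  then have "prod_list q = (s * i^u / (d * i^r))^2"
    using d(1) i0 by (simp add: power_mult_distrib power_divide field_simps)
  then show ?thesis by blast
qed

lemma witt_length_parity: assumes "witt_eq q p" "even (length p)" shows "even (length q)"
proof -
  obtain r s where "length (q @ hyp r) = length (p @ hyp s)" using assms(1) unfolding witt_eq_def isometric_def by blast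
  then have "length q + 2 * r = length p + 2 * s" by simp
  then show ?thesis using assms(2) by presburger
qed

lemma tensor_Cons: "tensor (x # a) b = map ((*) x) b @ tensor a b"
  by (simp add: tensor_def)

lemma tensor_Nil: "tensor [] b = []" by (simp add: tensor_def)

lemma tensor_one: "tensor a [1] = a" by (induction a) (simp_all add: tensor_Cons tensor_Nil)

lemma length_tensor: "length (tensor a b) = length a * length b"
  by (induction a) (simp_all add: tensor_Cons tensor_Nil)

lemma prod_tensor: "prod_list (tensor a b) = prod_list a ^ length b * prod_list b ^ length a"
proof (induction a)
  case Nil then show ?case by (simp add: tensor_Nil)
next
  case (Cons x a)
  have "prod_list (map ((*) x) b) = x ^ length b * prod_list b"
    by (induction b) (simp_all add: algebra_simps)
  then show ?case using Cons by (simp add: tensor_Cons power_mult_distrib algebra_simps)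
qed

lemma prod_concat: "prod_list (concat L) = prod_list (map prod_list L)"
  by (induction L) simp_all

lemma length_concat_even: "(\<forall>x\<in>set L. even (length x)) \<Longrightarrow> even (length (concat L))"
  by (induction L) auto

lemma prod_list_squares: "(\<forall>x\<in>set L. \<exists>t. x = t^2) \<Longrightarrow> \<exists>t. prod_list L = (t::'a::comm_ring_1)^2"
proof (induction L)
  case Nil show ?case by (intro exI[of _ 1]) simp
next
  case (Cons x L)
  then obtain t u where "x = t^2" "prod_list L = u^2" by auto
  then have "prod_list (x # L) = (t * u)^2" by (simp add: power_mult_distrib)
  then show ?case by blast
qed

lemma Ipow1_even: assumes "in_Ipow 1 q" shows "even (length q)"
proof -
  obtain fs :: "'a list list list" where fs: "\<forall>f\<in>set fs. length f = 1 \<and> (\<forall>\<phi>\<in>set f. even (length \<phi>) \<and> nondeg \<phi>)"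
    and w: "witt_eq q (concat (map (\<lambda>f. foldr tensor f [1]) fs))" using assms unfolding in_Ipow_def by blast
  have "even (length (foldr tensor f [1]))" if "f \<in> set fs" for f
  proof -
    from fs that obtain \<phi> where "f = [\<phi>]" "even (length \<phi>)"
      by (metis (no_types, lifting) length_0_conv length_Suc_conv list.set_intros(1) One_nat_def)
    then show ?thesis by (simp add: tensor_one)
  qed
  then have "even (length (concat (map (\<lambda>f. foldr tensor f [1]) fs)))"
    by (intro length_concat_even) auto
  then show ?thesis using w witt_length_parity by blast
qed

lemma Ipow2_props:
  fixes q :: "'a::field list" and i :: 'a
  assumes two: "(2::'a) \<noteq> 0" and ii: "i * i = -1" and "in_Ipow 2 q"
  shows "even (length q) \<and> (\<exists>t. prod_list q = t^2)"
proof -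
  obtain fs :: "'a list list list" where fs: "\<forall>f\<in>set fs. length f = 2 \<and> (\<forall>\<phi>\<in>set f. even (length \<phi>) \<and> nondeg \<phi>)"
    and w: "witt_eq q (concat (map (\<lambda>f. foldr tensor f [1]) fs))" using assms(3) unfolding in_Ipow_def by blast
  have P: "even (length (foldr tensor f [1])) \<and> (\<exists>t. prod_list (foldr tensor f [1]) = t^2)" if "f \<in> set fs" for f
  proof -
    from fs that have "length f = 2" by blast
    then obtain \<phi> \<psi> where f: "f = [\<phi>, \<psi>]"
      by (metis (no_types, lifting) length_0_conv length_Suc_conv numeral_2_eq_2)
    then have e: "even (length \<phi>)" "even (length \<psi>)" using fs that by auto
    then obtain k l where kl: "length \<phi> = 2 * k" "length \<psi> = 2 * l" by (auto elim!: evenE)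
    have "prod_list (tensor \<phi> \<psi>) = (prod_list \<phi> ^ l * prod_list \<psi> ^ k)^2"
      unfolding prod_tensor kl by (simp add: power_mult_distrib power_mult[symmetric] mult.commute)
    then show ?thesis using e f by (auto simp: tensor_one length_tensor)
  qed
  have "even (length (concat (map (\<lambda>f. foldr tensor f [1]) fs)))"
    using P by (intro length_concat_even) auto
  then have ev: "even (length q)" using w witt_length_parity by blast
  have "\<exists>t. prod_list (map prod_list (map (\<lambda>f. foldr tensor f [1]) fs)) = t^2"
    by (rule prod_list_squares) (use P in auto)
  then obtain t where "prod_list (concat (map (\<lambda>f. foldr tensor f [1]) fs)) = t^2"
    unfolding prod_concat by blast
  then have "\<exists>t. prod_list q = t^2" using witt_disc[OF two ii w] by blast
  then show ?thesis using ev by blast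
qed

lemma Pf_le:
  assumes "length ps = r" "\<forall>p\<in>set ps. length p = m \<and> nondeg p" "witt_eq q (concat (map pfister ps))"
  shows "Pf m q \<le> r"
  unfolding Pf_def by (rule Least_le) (use assms in blast)


lemmas mset_norm = mset.simps mset_append mset_replicate replicate_mset_Suc union_mset_add_mset_left
  union_mset_add_mset_right add_mset_commute add.left_neutral add.right_neutral

context
  fixes i :: "'a::field"
  assumes two: "(2::'a) \<noteq> 0" and ii: "i * i = -1"
begin

lemma rep_ones: "witt_eq (replicate (2 * k) (1::'a)) []"
proof (induction k)
  case 0 then show ?case by (simp add: witt_refl)
next
  case (Suc k)
  have "witt_eq ([1, 1] @ replicate (2 * k) (1::'a)) ([] @ [])"
    by (rule witt_app[OF witt_double[OF _ two ii] Suc]) simp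
  then show ?case by simp
qed

lemma rep_cancel: "even k \<Longrightarrow> witt_eq (X @ replicate k (1::'a)) X"
  by (rule witt_cancel) (auto elim!: evenE simp: rep_ones)

lemma drop_pair: assumes P: "(P::'a) \<noteq> 0" and e0: "e \<noteq> 0" and e: "P * e = s^2" shows "witt_eq [P, e] []"
proof -
  have sP: "s \<noteq> 0"
  proof
    assume "s = 0"
    then have "P * e = 0" using e by (simp only: power_zero_numeral)
    then show False using P e0 by (simp only: mult_eq_0_iff) blast
  qed
  have "P * (s / P)^2 = P * (s^2 / P^2)" by (simp only: power_divide)
  also have "\<dots> = s^2 / P" using P by (simp add: power2_eq_square)
  also have "\<dots> = (P * e) / P" by (simp only: e)
  also have "\<dots> = e" using P by (rule nonzero_mult_div_cancel_left)
  finally have eq: "P * (s / P)^2 = e" .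
  have "isometric [P] [P * (s / P)^2]" by (rule iso_scale) (simp add: sP P)
  then have "isometric [P] [e]" by (simp only: eq)
  then have "isometric [P, P] [P, e]" using iso_append_left[of "[P]" "[e]" "[P]"] by simp
  then have "witt_eq [P, e] [P, P]" by (rule witt_iso[OF isometric_sym])
  then show ?thesis using witt_double[OF P two ii] by (rule witt_trans)
qed

lemma pfister1: "pfister [a] = [1, a]"
  by (simp add: pfister_def tensor_def)

lemma pfister2: "pfister [b, a] = [1, a, b, b * a]"
  by (simp add: pfister_def tensor_def)

lemma key2: fixes a b :: 'a assumes "a \<noteq> 0" "b \<noteq> 0" shows "witt_eq [b, a] ([1, b * a] @ pfister [b, a])"
proof -
  have w1: "witt_eq [1, 1] ([]::'a list)" by (rule witt_double[OF _ two ii]) simp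
  have w2: "witt_eq [b * a, b * a] []" by (rule witt_double[OF _ two ii]) (use assms in simp)
  have "witt_eq ([1, 1] @ [b * a, b * a]) ([] @ [])" by (rule witt_app[OF w1 w2])
  then have "witt_eq ([1, 1] @ [b * a, b * a]) []" by (simp only: append_Nil)
  then have W: "witt_eq ([b, a] @ ([1, 1] @ [b * a, b * a])) [b, a]" by (rule witt_cancel)
  have "witt_eq ([1, b * a] @ pfister [b, a]) [b, a]"
    by (rule witt_mset_trans[OF _ W refl]) (simp only: pfister2 mset_norm append.simps ac_simps)
  then show ?thesis by (rule witt_sym)
qed

fun chain :: "'a \<Rightarrow> 'a list \<Rightarrow> 'a list list" where
  "chain b [] = []"
| "chain b (a # as) = [b, a] # chain (b * a) as"

lemma length_chain: "length (chain b as) = length as"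
  by (induction as arbitrary: b) simp_all

lemma chain_props: "b \<noteq> 0 \<Longrightarrow> nondeg as \<Longrightarrow> \<forall>p\<in>set (chain b as). length p = 2 \<and> nondeg p"
proof (induction as arbitrary: b)
  case Nil then show ?case by simp
next
  case (Cons a as)
  have a: "a \<noteq> 0" and n: "nondeg as" using Cons.prems(2) by (auto simp: nondeg_def)
  have "b * a \<noteq> 0" using a Cons.prems(1) by simp
  then have "\<forall>p\<in>set (chain (b * a) as). length p = 2 \<and> nondeg p" using Cons.IH n by blast
  moreover have "nondeg [b, a]" using a Cons.prems(1) by (simp add: nondeg_def)
  ultimately show ?case by simp
qed

lemma core:
  "nondeg (b # as) \<Longrightarrow>
   witt_eq (b # as) (replicate (length as) 1 @ [b * prod_list as] @ concat (map pfister (chain b as)))"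
proof (induction as arbitrary: b)
  case Nil then show ?case by (simp add: witt_refl)
next
  case (Cons a as)
  have a: "a \<noteq> 0" and b: "b \<noteq> 0" and nd: "nondeg ((b * a) # as)" using Cons.prems by (auto simp: nondeg_def)
  let ?R = "replicate (length as) 1 @ [b * a * prod_list as] @ concat (map pfister (chain (b * a) as))"
  have IH: "witt_eq ((b * a) # as) ?R" using Cons.IH[OF nd] .
  have 1: "witt_eq ([b, a] @ as) (([1, b * a] @ pfister [b, a]) @ as)"
    by (rule witt_app[OF key2[OF a b] witt_refl])
  have 2: "witt_eq (([1] @ pfister [b, a]) @ ((b * a) # as)) (([1] @ pfister [b, a]) @ ?R)"
    by (rule witt_app[OF witt_refl IH])
  have 3: "witt_eq ([b, a] @ as) (([1] @ pfister [b, a]) @ ?R)"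
    by (rule witt_trans[OF 1 witt_mset_trans[OF _ 2 refl]]) (simp only: mset_norm append.simps append_assoc length_Cons replicate_Suc mult.assoc prod_list.Cons chain.simps list.map concat.simps ac_simps)
  show ?case
    by (rule witt_mset_trans[OF _ 3]) (simp_all only: mset_norm append.simps append_assoc length_Cons replicate_Suc mult.assoc prod_list.Cons chain.simps list.map concat.simps ac_simps)
qed

lemma core_final:
  assumes nd: "nondeg (b # as @ [e])" and sq: "prod_list (b # as @ [e]) = s^2"
  shows "witt_eq (b # as @ [e]) (replicate (length as) 1 @ concat (map pfister (chain b as)))"
proof -
  have nd1: "nondeg (b # as)" using nd by (simp add: nondeg_def)
  let ?P = "b * prod_list as"
  let ?C = "concat (map pfister (chain b as))"
  have P: "?P \<noteq> 0" using nd1 unfolding nondeg_def by (auto simp: prod_list_zero_iff)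
  have e0: "e \<noteq> 0" using nd by (simp add: nondeg_def)
  have 1: "witt_eq ((b # as) @ [e]) ((replicate (length as) 1 @ [?P] @ ?C) @ [e])"
    by (rule witt_app[OF core[OF nd1] witt_refl])
  have "?P * e = s^2" using sq by (simp add: mult.assoc)
  then have 2: "witt_eq ((replicate (length as) 1 @ ?C) @ [?P, e]) (replicate (length as) 1 @ ?C)"
    by (intro witt_cancel drop_pair P e0)
  have "witt_eq ((b # as) @ [e]) (replicate (length as) 1 @ ?C)"
    by (rule witt_trans[OF 1 witt_mset_trans[OF _ 2 refl]]) (simp only: mset_norm append.simps append_assoc length_Cons replicate_Suc mult.assoc prod_list.Cons chain.simps list.map concat.simps ac_simps)
  then show ?thesis by simp
qed

end


lemma split_ends: "2 \<le> length l \<Longrightarrow> \<exists>b as e. l = b # as @ [e] \<and> length as = length l - 2"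
proof -
  assume l: "2 \<le> length l"
  then obtain b r where r: "l = b # r" by (cases l) auto
  then have "r \<noteq> []" using l by auto
  then have "r = butlast r @ [last r]" by simp
  then show ?thesis using r by (intro exI[of _ b] exI[of _ "butlast r"] exI[of _ "last r"]) auto
qed

lemma pf1: "pfister [a] = [1, a]"
  by (simp add: pfister_def tensor_def)

lemma mset_pf1: "mset (concat (map pfister (map (\<lambda>a. [a]) q))) = mset q + replicate_mset (length q) 1"
  by (induction q) (simp_all add: pf1)

lemma singles_ok: "nondeg q \<Longrightarrow> \<forall>p\<in>set (map (\<lambda>a. [a]) q). length p = 1 \<and> nondeg p"
  by (auto simp: nondeg_def)

lemma rep_front:
  fixes i :: "'a::field"
  assumes two: "(2::'a) \<noteq> 0" and ii: "i * i = -1" and ev: "even k"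
  shows "witt_eq (replicate k (1::'a) @ X) X"
proof -
  obtain j where k: "k = 2 * j" using ev by (auto elim!: evenE)
  have "witt_eq (replicate (2 * j) (1::'a) @ X) ([] @ X)" by (rule witt_app[OF rep_ones[OF two ii] witt_refl])
  then show ?thesis using k by simp
qed

theorem proposition2p1:
  fixes q :: "'a::field list" and n :: nat
  assumes char: "(2::'a) \<noteq> 0"
    and sqrtm1: "\<exists>i::'a. i * i = -1"
    and nd: "nondeg q"
    and dim: "n = length q"
  shows "(in_Ipow 1 q \<longrightarrow> Pf 1 q \<le> n) \<and>
         (in_Ipow 1 q \<and> represents q 1 \<longrightarrow> Pf 1 q \<le> n - 1) \<and>
         (in_Ipow 2 q \<longrightarrow> Pf 2 q \<le> n - 2) \<and>
         (in_Ipow 2 q \<and> represents q 1 \<longrightarrow> Pf 2 q \<le> n - 3)"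
proof -
  obtain i :: 'a where ii: "i * i = -1" using sqrtm1 by blast
  note two = char
  have rep1: "\<exists>q'. nondeg q' \<and> isometric q (1 # q') \<and> length q' = n - 1 \<and> 1 \<le> n" if R: "represents q 1"
  proof -
    obtain x where "qval q x = 1" using R unfolding represents_def by blast
    then obtain q' where "nondeg q'" "isometric q (1 # q')" using repr_split[OF nd] by fastforce
    moreover then have "length q = Suc (length q')" unfolding isometric_def by simp
    ultimately show ?thesis using dim by auto
  qed
  have P1: "Pf 1 q \<le> n" if H: "in_Ipow 1 q"
  proof -
    have ev: "even n" using Ipow1_even[OF H] dim by simp
    have "witt_eq (q @ replicate n 1) q" by (rule rep_cancel[OF two ii ev])
    then have "witt_eq q (q @ replicate n 1)" by (rule witt_sym)
    then have "witt_eq q (concat (map pfister (map (\<lambda>a. [a]) q)))"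
      by (rule witt_mset_trans[OF refl _]) (simp only: mset_pf1 mset_append mset_replicate dim)
    then show ?thesis using singles_ok[OF nd] dim by (intro Pf_le[of "map (\<lambda>a. [a]) q"]) auto
  qed
  have P2: "Pf 1 q \<le> n - 1" if H: "in_Ipow 1 q" "represents q 1"
  proof -
    have ev: "even n" using Ipow1_even[OF H(1)] dim by simp
    obtain q' where q': "nondeg q'" "isometric q (1 # q')" "length q' = n - 1" "1 \<le> n" using rep1[OF H(2)] by blast
    have ev2: "even (n - 2)" using ev q'(4) by presburger
    have "witt_eq ((1 # q') @ replicate (n - 2) 1) (1 # q')" by (rule rep_cancel[OF two ii ev2])
    then have W: "witt_eq q ((1 # q') @ replicate (n - 2) 1)"
      by (rule witt_trans[OF witt_iso[OF q'(2)] witt_sym])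
    have nsuc: "n - 1 = Suc (n - 2)" using ev q'(4) by presburger
    have "witt_eq q (concat (map pfister (map (\<lambda>a. [a]) q')))"
      by (rule witt_mset_trans[OF refl W]) (simp only: mset_pf1 q'(3) nsuc mset_append mset_replicate replicate_mset_Suc, simp)
    then show ?thesis using singles_ok[OF q'(1)] q'(3) by (intro Pf_le[of "map (\<lambda>a. [a]) q'"]) auto
  qed
  have P3: "Pf 2 q \<le> n - 2" if H: "in_Ipow 2 q"
  proof -
    obtain t where ev: "even n" and sq: "prod_list q = t^2" using Ipow2_props[OF two ii H] dim by blast
    show ?thesis
    proof (cases "n = 0")
      case True
      then have "q = []" using dim by simp
      then have "witt_eq q (concat (map pfister []))" by (simp add: witt_refl)
      then have "Pf 2 q \<le> 0" by (intro Pf_le[of "[]"]) auto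
      then show ?thesis by simp
    next
      case False
      then have "2 \<le> length q" using ev dim by presburger
      then obtain b as e where q: "q = b # as @ [e]" and las: "length as = n - 2" using split_ends dim by blast
      have w: "witt_eq q (replicate (length as) 1 @ concat (map pfister (chain b as)))"
        using core_final[OF two ii, of b as e t] nd sq q by simp
      have ev2: "even (length as)" using las ev False by presburger
      have "witt_eq (replicate (length as) 1 @ concat (map pfister (chain b as))) (concat (map pfister (chain b as)))"
        by (rule rep_front[OF two ii ev2])
      then have "witt_eq q (concat (map pfister (chain b as)))" by (rule witt_trans[OF w])
      moreover have "\<forall>p\<in>set (chain b as). length p = 2 \<and> nondeg p"
        using nd q by (intro chain_props[OF two ii]) (auto simp: nondeg_def)
      ultimately show ?thesis using las by (intro Pf_le[of "chain b as"]) (auto simp: length_chain[OF two ii])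
    qed
  qed
  have P4: "Pf 2 q \<le> n - 3" if H: "in_Ipow 2 q" "represents q 1"
  proof -
    obtain t where ev: "even n" and sq: "prod_list q = t^2" using Ipow2_props[OF two ii H(1)] dim by blast
    obtain q' where q': "nondeg q'" "isometric q (1 # q')" "length q' = n - 1" "1 \<le> n" using rep1[OF H(2)] by blast
    obtain d where "d \<noteq> 0" "prod_list (1 # q') = d^2 * prod_list q" using iso_disc[OF two q'(2)] by blast
    then have sq': "prod_list q' = (d * t)^2" using sq by (simp add: power_mult_distrib)
    have wq: "witt_eq q (1 # q')" by (rule witt_iso[OF q'(2)])
    show ?thesis
    proof (cases "n = 2")
      case True
      then obtain e where e: "q' = [e]" using q'(3) by (cases q') auto
      then have "e \<noteq> 0" using q'(1) by (simp add: nondeg_def)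
      moreover have "1 * e = (d * t)^2" using sq' e by simp
      ultimately have "witt_eq [1, e] []" by (intro drop_pair[OF two ii]) simp_all
      then have "witt_eq (1 # q') []" using e by simp
      then have "witt_eq q (concat (map pfister []))" using witt_trans[OF wq] by simp
      then have "Pf 2 q \<le> 0" by (intro Pf_le[of "[]"]) auto
      then show ?thesis by simp
    next
      case False
      then have n4: "4 \<le> n" using ev q'(4) by presburger
      then have "2 \<le> length q'" using q'(3) by simp
      then obtain b as e where qq: "q' = b # as @ [e]" and las0: "length as = length q' - 2"
        using split_ends by blast
      have las: "length as = n - 3" using las0 q'(3) by simp
      have w: "witt_eq q' (replicate (length as) 1 @ concat (map pfister (chain b as)))"
        using core_final[OF two ii, of b as e "d * t"] q'(1) sq' qq by simp
      have "witt_eq ([1] @ q') ([1] @ (replicate (length as) 1 @ concat (map pfister (chain b as))))"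
        by (rule witt_app[OF witt_refl w])
      then have "witt_eq (1 # q') ([1] @ (replicate (length as) 1 @ concat (map pfister (chain b as))))"
        by simp
      then have w2: "witt_eq q ([1] @ (replicate (length as) 1 @ concat (map pfister (chain b as))))"
        by (rule witt_trans[OF wq])
      have ev2: "even (Suc (length as))" using las ev n4 by presburger
      have "witt_eq (replicate (Suc (length as)) 1 @ concat (map pfister (chain b as))) (concat (map pfister (chain b as)))"
        by (rule rep_front[OF two ii ev2])
      then have R: "witt_eq ([1] @ (replicate (length as) 1 @ concat (map pfister (chain b as)))) (concat (map pfister (chain b as)))"
        by simp
      have "witt_eq q (concat (map pfister (chain b as)))"
        by (rule witt_trans[OF w2 R])
      moreover have "\<forall>p\<in>set (chain b as). length p = 2 \<and> nondeg p"
        using q'(1) qq by (intro chain_props[OF two ii]) (auto simp: nondeg_def)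
      ultimately show ?thesis using las by (intro Pf_le[of "chain b as"]) (auto simp: length_chain[OF two ii])
    qed
  qed
  show ?thesis using P1 P2 P3 P4 by blast
qed


end
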